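(* Let $f:\mathbb{R}^\ell\times\mathbb{R}^m\to\mathbb{R}^\ell$ be $C^1$, let $\Lambda$ be a parameter shift with limits $\lambda_\pm$, and let $X$ define a stable path. Let $N\in\mathbb{N}$ be such that $\|[D_xf(X(s),\Lambda(s))]^n\|<\frac14$ for all $s\in\mathbb{R}$ and $n\ge N$. Then for $\epsilon>0$ and $r>0$ sufficiently small, the graph transforms $G_n:S\to S$ are well defined and satisfy $$\|G_nu-G_nu'\|_\infty\le\tfrac12\|u-u'\|_\infty$$ for all $u,u'\in S$ and all $n\in\{N,N+1,\ldots,N(N+1)\}$.
   Context: A parameter shift is a $C^1$ function $\Lambda:\mathbb{R}\to\mathbb{R}^m$ with $\lim_{s\to\pm\infty}\Lambda(s)=\lambda_\pm$ and $\lim_{s\to\pm\infty}\Lambda'(s)=0$. A stable path is given by $X:\mathbb{R}\to\mathbb{R}^\ell$ such that: $X(s)$ is a fixed point of $f(\cdot,\Lambda(s))$ for every $s$; $\{(s,X(s))\}$ is a connected curve; the limits $X_\pm=\lim_{s\to\pm\infty}X(s)$ exist and are fixed points of $f(\cdot,\lambda_\pm)$; and the spectral radius of $D_xf(X(s),\Lambda(s))$ is $<1$ for all $s\in\mathbb{R}\cup\{\pm\infty\}$. For $r\ge0$, $F_r(s,x)=(s+r,f(x,\Lambda(s)))$, $F_r^n$ is its $n$-fold composition, and $\pi(s,x)=x$. $\mathcal{N}_\epsilon=\{(s,x):\|x-X(s)\|\le\epsilon\}$ (Euclidean norm). $S$ is the set of functions $u:\mathbb{R}\to\mathbb{R}^\ell$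 with $(s,u(s))\in\mathcal{N}_\epsilon$ for all $s$, with metric from $\|u\|_\infty=\sup_s\|u(s)\|$. The graph transform $G_n$ is defined by $(G_nu)(s+nr)=\pi\circ F_r^n(s,u(s))$ for all $s\in\mathbb{R}$, i.e. $F_r^n$ maps the point $(s,u(s))$ to $(s+nr,(G_nu)(s+nr))$. *)

theory Defs
  imports "HOL-Analysis.Analysis"
begin

definition Dx :: "((real^'l) \<times> (real^'m) \<Rightarrow> ((real^'l) \<times> (real^'m)) \<Rightarrow>\<^sub>L (real^'l))
                   \<Rightarrow> real^'l \<Rightarrow> real^'m \<Rightarrow> real^'l \<Rightarrow> real^'l" where
  "Dx f' x lam = (\<lambda>h. blinfun_apply (f' (x, lam)) (h, 0))"

definition cplx_eigenvalues :: "real^'n^'n \<Rightarrow> complex set" where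
  "cplx_eigenvalues A =
     {z. det (mat z - (\<chi> i j. complex_of_real (A $ i $ j)) :: complex^'n^'n) = 0}"

definition spec_rad :: "real^'n^'n \<Rightarrow> real" where
  "spec_rad A = Max (cmod ` cplx_eigenvalues A)"

definition parameter_shift ::
  "(real \<Rightarrow> real^'m) \<Rightarrow> real^'m \<Rightarrow> real^'m \<Rightarrow> bool" where
  "parameter_shift Lam lm lp \<longleftrightarrow>
     (\<exists>Lam'. (\<forall>s. (Lam has_vector_derivative Lam' s) (at s)) \<and> continuous_on UNIV Lam'
        \<and> (Lam' \<longlongrightarrow> 0) at_bot \<and> (Lam' \<longlongrightarrow> 0) at_top)
     \<and> (Lam \<longlongrightarrow> lm) at_bot \<and> (Lam \<longlongrightarrow> lp) at_top"

definition stable_path ::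
  "((real^'l) \<times> (real^'m) \<Rightarrow> real^'l) \<Rightarrow> ((real^'l) \<times> (real^'m) \<Rightarrow> ((real^'l) \<times> (real^'m)) \<Rightarrow>\<^sub>L (real^'l))
   \<Rightarrow> (real \<Rightarrow> real^'m) \<Rightarrow> real^'m \<Rightarrow> real^'m \<Rightarrow> (real \<Rightarrow> real^'l) \<Rightarrow> bool" where
  "stable_path f f' Lam lm lp X \<longleftrightarrow>
     (\<forall>s. f (X s, Lam s) = X s)
     \<and> connected {(s, X s) | s. True}
     \<and> (\<exists>Xm Xp. (X \<longlongrightarrow> Xm) at_bot \<and> (X \<longlongrightarrow> Xp) at_top
          \<and> f (Xm, lm) = Xm \<and> f (Xp, lp) = Xp
          \<and> spec_rad (matrix (Dx f' Xm lm)) < 1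
          \<and> spec_rad (matrix (Dx f' Xp lp)) < 1)
     \<and> (\<forall>s. spec_rad (matrix (Dx f' (X s) (Lam s))) < 1)"

definition Fr :: "((real^'l) \<times> (real^'m) \<Rightarrow> real^'l) \<Rightarrow> (real \<Rightarrow> real^'m) \<Rightarrow> real
                  \<Rightarrow> real \<times> (real^'l) \<Rightarrow> real \<times> (real^'l)" where
  "Fr f Lam r = (\<lambda>(s, x). (s + r, f (x, Lam s)))"

text \<open>Graph transform: (G_n u)(s + n r) = pi (F_r^n (s, u s)).\<close>
definition graph_transform ::
  "((real^'l) \<times> (real^'m) \<Rightarrow> real^'l) \<Rightarrow> (real \<Rightarrow> real^'m) \<Rightarrow> real \<Rightarrow> nat
   \<Rightarrow> (real \<Rightarrow> real^'l) \<Rightarrow> real \<Rightarrow> real^'l" where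
  "graph_transform f Lam r n u =
     (\<lambda>t. snd ((Fr f Lam r ^^ n) (t - real n * r, u (t - real n * r))))"

definition Sspace :: "real \<Rightarrow> (real \<Rightarrow> real^'l) \<Rightarrow> (real \<Rightarrow> real^'l) set" where
  "Sspace eps X = {u. \<forall>s. norm (u s - X s) \<le> eps}"

definition sup_dist :: "(real \<Rightarrow> real^'l) \<Rightarrow> (real \<Rightarrow> real^'l) \<Rightarrow> real" where
  "sup_dist u v = (SUP s. norm (u s - v s))"

end

theory Submission
  imports Defs
begin

lemma open_lt_fst: "open {p::real \<times> 'a::topological_space. fst p < b}"
  by (intro open_Collect_less continuous_intros)
lemma open_gt_fst: "open {p::real \<times> 'a::topological_space. b < fst p}"
  by (intro open_Collect_less continuous_intros)
lemma open_near: "open {p::real \<times> 'a::real_normed_vector. norm (snd p - c) < d}"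
  by (intro open_Collect_less continuous_intros)
lemma open_far: "open {p::real \<times> 'a::real_normed_vector. d < norm (snd p - c)}"
  by (intro open_Collect_less continuous_intros)

lemma sep_right:
  fixes X :: "real \<Rightarrow> 'a::real_normed_vector"
  assumes conn: "connected {(s, X s) | s. True}"
  and as0: "a < s0" and s01: "s0 < s1" and s1b: "s1 < b"
  and ne: "\<And>s. a < s \<Longrightarrow> s < b \<Longrightarrow> norm (X s - c) \<noteq> d"
  and near0: "norm (X s0 - c) < d"
  shows "norm (X s1 - c) < d"
proof (rule ccontr)
  assume "\<not> ?thesis"
  with ne[of s1] as0 s01 s1b have far1: "d < norm (X s1 - c)" by fastforce
  let ?G = "{(s, X s) | s. True}"
  show False
  proof (cases "\<exists>s2. a < s2 \<and> s2 < s0 \<and> d < norm (X s2 - c)")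
    case True
    then obtain s2 where s2: "a < s2" "s2 < s0" "d < norm (X s2 - c)" by blast
    define U where "U = {p. s2 < fst p} \<inter> {p. fst p < s1} \<inter> {p::real \<times> 'a. norm (snd p - c) < d}"
    define V where "V = {p. fst p < s2} \<union> {p. s1 < fst p} \<union> ({p. a < fst p} \<inter> {p. fst p < b} \<inter> {p::real \<times> 'a. d < norm (snd p - c)})"
    have oU: "open U" unfolding U_def by (intro open_Int open_lt_fst open_gt_fst open_near)
    have oV: "open V" unfolding V_def by (intro open_Un open_Int open_lt_fst open_gt_fst open_far)
    have "U \<inter> V \<inter> ?G = {}" unfolding U_def V_def by auto
    moreover have "?G \<subseteq> U \<union> V"
    proof
      fix p assume "p \<in> ?G"
      then obtain s where p: "p = (s, X s)" by blast
      show "p \<in> U \<union> V"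
      proof (cases "s < s2 \<or> s1 < s")
        case True then show ?thesis unfolding p V_def by auto
      next
        case False
        then have "a < s" "s < b" using s2 s01 s1b by auto
        with ne have "norm (X s - c) \<noteq> d" by blast
        then show ?thesis using False s2 far1 s01 s1b \<open>a < s\<close> \<open>s < b\<close> unfolding p U_def V_def
          by (cases "s = s2"; cases "s = s1"; auto)
      qed
    qed
    moreover have "(s0, X s0) \<in> U \<inter> ?G" using s2 s01 near0 unfolding U_def by auto
    then have "U \<inter> ?G \<noteq> {}" by blast
    moreover have "(s1, X s1) \<in> V \<inter> ?G" using far1 as0 s01 s1b unfolding V_def by auto
    then have "V \<inter> ?G \<noteq> {}" by blast
    ultimately show False using connectedD[OF conn oU oV] by blast
  next
    case False
    define U where "U = {p. fst p < s0} \<union> ({p. fst p < s1} \<inter> {p::real \<times> 'a. norm (snd p - c) < d})"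
    define V where "V = {p. s1 < fst p} \<union> ({p. a < fst p} \<inter> {p. fst p < b} \<inter> {p::real \<times> 'a. d < norm (snd p - c)})"
    have oU: "open U" unfolding U_def by (intro open_Un open_Int open_lt_fst open_gt_fst open_near)
    have oV: "open V" unfolding V_def by (intro open_Un open_Int open_lt_fst open_gt_fst open_far)
    have "U \<inter> V \<inter> ?G = {}" using False s01 unfolding U_def V_def by auto
    moreover have "?G \<subseteq> U \<union> V"
    proof
      fix p assume "p \<in> ?G"
      then obtain s where p: "p = (s, X s)" by blast
      show "p \<in> U \<union> V"
      proof (cases "s < s0 \<or> s1 < s")
        case True then show ?thesis unfolding p U_def V_def by auto
      next
        case False
        then have "a < s" "s < b" using as0 s01 s1b by auto
        with ne have "norm (X s - c) \<noteq> d" by blast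
        then show ?thesis using False far1 as0 s01 s1b \<open>a < s\<close> \<open>s < b\<close> unfolding p U_def V_def
          by (cases "s = s1"; auto)
      qed
    qed
    moreover have "(s0, X s0) \<in> U \<inter> ?G" using s01 near0 unfolding U_def by auto
    then have "U \<inter> ?G \<noteq> {}" by blast
    moreover have "(s1, X s1) \<in> V \<inter> ?G" using far1 as0 s01 s1b unfolding V_def by auto
    then have "V \<inter> ?G \<noteq> {}" by blast
    ultimately show False using connectedD[OF conn oU oV] by blast
  qed
qed

lemma sep_both:
  fixes X :: "real \<Rightarrow> 'a::real_normed_vector"
  assumes conn: "connected {(s, X s) | s. True}"
  and as0: "a < s0" and s0b: "s0 < b"
  and ne: "\<And>s. a < s \<Longrightarrow> s < b \<Longrightarrow> norm (X s - c) \<noteq> d"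
  and near0: "norm (X s0 - c) < d"
  and s: "a < s" "s < b"
  shows "norm (X s - c) < d"
proof -
  consider "s = s0" | "s0 < s" | "s < s0" by linarith
  then show ?thesis
  proof cases
    case 1 then show ?thesis using near0 by simp
  next
    case 2 then show ?thesis using sep_right[OF conn as0 2 s(2) ne near0] by simp
  next
    case 3
    define Y where "Y = (\<lambda>t. X (- t))"
    have "{(t, Y t) | t. True} = (\<lambda>p. (- fst p, snd p)) ` {(s, X s) | s. True}"
      unfolding Y_def by (auto simp: image_iff intro!: exI[of _ "- _"])
    moreover have "connected ((\<lambda>p. (- fst p, snd p)) ` {(s, X s) | s. True})"
      by (intro connected_continuous_image conn continuous_intros)
    ultimately have connY: "connected {(t, Y t) | t. True}" by simp
    have h1: "-b < -s0" "-s0 < -s" "-s < -a" using s0b 3 s by auto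
    have ne': "\<And>t. -b < t \<Longrightarrow> t < -a \<Longrightarrow> norm (Y t - c) \<noteq> d" using ne by (simp add: Y_def)
    have near0': "norm (Y (-s0) - c) < d" using near0 by (simp add: Y_def)
    have "norm (Y (- s) - c) < d" by (rule sep_right[OF connY h1(1) h1(2) h1(3) ne' near0'])
    then show ?thesis by (simp add: Y_def)
  qed
qed

lemma uc_lim:
  fixes g :: "real \<Rightarrow> 'a::real_normed_vector"
  assumes cont: "continuous_on UNIV g" and lb: "(g \<longlongrightarrow> a) at_bot" and lt: "(g \<longlongrightarrow> b) at_top"
  shows "uniformly_continuous_on UNIV g \<and> bounded (range g)"
proof
  show "uniformly_continuous_on UNIV g"
    unfolding uniformly_continuous_on_def
  proof (intro allI impI)
    fix e :: real assume e: "e > 0"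
    have "\<forall>\<^sub>F x in at_top. dist (g x) b < e/2" using tendsto_iff[THEN iffD1, OF lt] e by (meson half_gt_zero)
    then obtain T2 where T2: "\<And>x. x \<ge> T2 \<Longrightarrow> dist (g x) b < e/2" by (auto simp: eventually_at_top_linorder)
    have "\<forall>\<^sub>F x in at_bot. dist (g x) a < e/2" using tendsto_iff[THEN iffD1, OF lb] e by (meson half_gt_zero)
    then obtain T1 where T1: "\<And>x. x \<le> T1 \<Longrightarrow> dist (g x) a < e/2" by (auto simp: eventually_at_bot_linorder)
    have "uniformly_continuous_on {T1 - 1 .. T2 + 1} g"
      by (rule compact_uniformly_continuous) (use cont in \<open>auto intro: continuous_on_subset\<close>)
    then obtain d0 where d0: "d0 > 0" "\<And>x x'. x \<in> {T1 - 1 .. T2 + 1} \<Longrightarrow> x' \<in> {T1 - 1 .. T2 + 1} \<Longrightarrow> dist x' x < d0 \<Longrightarrow> dist (g x') (g x) < e"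
      unfolding uniformly_continuous_on_def using e by metis
    show "\<exists>d>0. \<forall>x\<in>UNIV. \<forall>x'\<in>UNIV. dist x' x < d \<longrightarrow> dist (g x') (g x) < e"
    proof (intro exI[of _ "min d0 1"] conjI ballI impI)
      show "min d0 1 > 0" using d0 by simp
      fix x x' :: real assume d: "dist x' x < min d0 1"
      show "dist (g x') (g x) < e"
      proof (cases "x \<in> {T1 - 1 .. T2 + 1} \<and> x' \<in> {T1 - 1 .. T2 + 1}")
        case True then show ?thesis using d0 d by auto
      next
        case False
        with d have "(x \<le> T1 \<and> x' \<le> T1) \<or> (x \<ge> T2 \<and> x' \<ge> T2)"
          by (auto simp: dist_real_def)
        then show ?thesis
        proof
          assume "x \<le> T1 \<and> x' \<le> T1"
          then have "dist (g x') a < e/2" "dist (g x) a < e/2" using T1 by auto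
          then show ?thesis by (metis dist_triangle_half_l)
        next
          assume "x \<ge> T2 \<and> x' \<ge> T2"
          then have "dist (g x') b < e/2" "dist (g x) b < e/2" using T2 by auto
          then show ?thesis by (metis dist_triangle_half_l)
        qed
      qed
    qed
  qed
next
  have "\<forall>\<^sub>F x in at_top. dist (g x) b < 1" using lt by (simp add: tendsto_iff)
  then obtain T2 where T2: "\<And>x. x \<ge> T2 \<Longrightarrow> dist (g x) b < 1" by (auto simp: eventually_at_top_linorder)
  have "\<forall>\<^sub>F x in at_bot. dist (g x) a < 1" using lb by (simp add: tendsto_iff)
  then obtain T1 where T1: "\<And>x. x \<le> T1 \<Longrightarrow> dist (g x) a < 1" by (auto simp: eventually_at_bot_linorder)
  have "range g \<subseteq> g ` {T1 .. T2} \<union> ball a 1 \<union> ball b 1"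
  proof
    fix y assume "y \<in> range g"
    then obtain x where y: "y = g x" by auto
    show "y \<in> g ` {T1 .. T2} \<union> ball a 1 \<union> ball b 1"
      using T1[of x] T2[of x] by (cases "x \<le> T1"; cases "x \<ge> T2"; auto simp: y dist_commute)
  qed
  moreover have "bounded (g ` {T1 .. T2})"
    by (intro compact_imp_bounded compact_continuous_image) (use cont in \<open>auto intro: continuous_on_subset\<close>)
  ultimately show "bounded (range g)" by (meson bounded_Un bounded_ball bounded_subset)
qed

fun itr :: "(nat \<Rightarrow> 'a \<Rightarrow> 'a) \<Rightarrow> 'a \<Rightarrow> nat \<Rightarrow> 'a" where
  "itr F y 0 = y"
| "itr F y (Suc k) = F k (itr F y k)"

lemma itr_stay:
  fixes F :: "nat \<Rightarrow> 'a::real_normed_vector \<Rightarrow> 'a"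
  assumes L: "L \<ge> 1" and g: "\<gamma> \<ge> 0" and e: "e \<ge> 0"
  and Lip: "\<And>k x x'. k < n \<Longrightarrow> norm (x - x0) \<le> \<rho> \<Longrightarrow> norm (x' - x0) \<le> \<rho> \<Longrightarrow> norm (F k x - F k x') \<le> L * norm (x - x')"
  and drift: "\<And>k. k < n \<Longrightarrow> norm (F k x0 - x0) \<le> \<gamma>"
  and y: "norm (y - x0) \<le> e"
  and small: "L ^ n * (e + real n * \<gamma>) \<le> \<rho>"
  shows "k \<le> n \<Longrightarrow> norm (itr F y k - x0) \<le> L ^ k * (e + real k * \<gamma>)"
proof (induction k)
  case 0 then show ?case using y by simp
next
  case (Suc k)
  then have kn: "k < n" by simp
  have IH: "norm (itr F y k - x0) \<le> L ^ k * (e + real k * \<gamma>)" using Suc by simp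
  have "L ^ k * (e + real k * \<gamma>) \<le> L ^ n * (e + real n * \<gamma>)"
    by (intro mult_mono power_increasing) (use L g e kn in \<open>auto intro: mult_right_mono\<close>)
  with IH small have inr: "norm (itr F y k - x0) \<le> \<rho>" by linarith
  have r0: "\<rho> \<ge> 0" using inr by (meson norm_ge_zero order_trans)
  have "norm (itr F y (Suc k) - x0) \<le> norm (F k (itr F y k) - F k x0) + norm (F k x0 - x0)"
    using norm_triangle_ineq[of "F k (itr F y k) - F k x0" "F k x0 - x0"] by simp
  also have "\<dots> \<le> L * (L ^ k * (e + real k * \<gamma>)) + \<gamma>"
  proof -
    have "norm (F k (itr F y k) - F k x0) \<le> L * norm (itr F y k - x0)" using Lip[OF kn inr] r0 by simp
    also have "\<dots> \<le> L * (L ^ k * (e + real k * \<gamma>))" using IH L by (simp add: mult_left_mono)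
    finally show ?thesis using drift[OF kn] by linarith
  qed
  also have "\<dots> \<le> L ^ Suc k * (e + real (Suc k) * \<gamma>)"
  proof -
    have "1 \<le> L ^ Suc k" using L by (rule one_le_power)
    then have "\<gamma> \<le> L ^ Suc k * \<gamma>" using g by (simp add: mult_le_cancel_right1)
    then show ?thesis by (simp add: algebra_simps)
  qed
  finally show ?case .
qed

lemma itr_contract:
  fixes F :: "nat \<Rightarrow> 'a::real_normed_vector \<Rightarrow> 'a" and A :: "'a \<Rightarrow> 'a"
  assumes A: "bounded_linear A" and Ab: "\<And>h. norm (A h) \<le> M * norm h"
  and L: "L \<ge> 1" "M \<le> L" "M + \<delta> \<le> L" "\<delta> \<ge> 0" and M0: "M \<ge> 0"
  and LIN: "\<And>k x x'. k < n \<Longrightarrow> norm (x - x0) \<le> \<rho> \<Longrightarrow> norm (x' - x0) \<le> \<rho> \<Longrightarrow> norm (F k x - F k x' - A (x - x')) \<le> \<delta> * norm (x - x')"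
  and stay: "\<And>k. k \<le> n \<Longrightarrow> norm (itr F y k - x0) \<le> \<rho>" "\<And>k. k \<le> n \<Longrightarrow> norm (itr F y' k - x0) \<le> \<rho>"
  shows "k \<le> n \<Longrightarrow> norm (itr F y k - itr F y' k - (A ^^ k) (y - y')) \<le> real k * (\<delta> * L^k * norm (y - y')) \<and> norm (itr F y k - itr F y' k) \<le> L^k * norm (y - y')"
proof (induction k)
  case 0 then show ?case by simp
next
  case (Suc k)
  then have kn: "k < n" by simp
  define a where "a = itr F y k"
  define b where "b = itr F y' k"
  define D where "D = norm (y - y')"
  define P where "P = (A ^^ k) (y - y')"
  define q where "q = \<delta> * L^k * D"
  have IH1: "norm (a - b - P) \<le> real k * q" and IH2: "norm (a - b) \<le> L^k * D"
    using Suc kn unfolding a_def b_def P_def q_def D_def by auto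
  have q0: "q \<ge> 0" using L unfolding q_def D_def by simp
  have lin: "norm (F k a - F k b - A (a - b)) \<le> \<delta> * norm (a - b)"
    using LIN[OF kn] stay kn unfolding a_def b_def by simp
  have "itr F y (Suc k) - itr F y' (Suc k) - (A ^^ Suc k) (y - y') = (F k a - F k b - A (a - b)) + A (a - b - P)"
  proof -
    have e2: "A (a - b - P) = A (a - b) - A P" using linear_simps(2)[OF A] .
    have "itr F y (Suc k) - itr F y' (Suc k) - (A ^^ Suc k) (y - y') = F k a - F k b - A P"
      by (simp add: a_def b_def P_def)
    also have "\<dots> = (F k a - F k b - A (a - b)) + A (a - b - P)"
      unfolding e2 by (simp add: algebra_simps)
    finally show ?thesis .
  qed
  then have "norm (itr F y (Suc k) - itr F y' (Suc k) - (A ^^ Suc k) (y - y')) \<le> \<delta> * norm (a - b) + M * norm (a - b - P)"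
    apply (simp only:) using lin Ab[of "a - b - P"] norm_triangle_ineq[of "F k a - F k b - A (a - b)" "A (a - b - P)"] by linarith
  also have "\<dots> \<le> q + M * (real k * q)"
  proof (rule add_mono)
    show "\<delta> * norm (a - b) \<le> q" unfolding q_def using IH2 L(4) mult_left_mono by (fastforce simp: mult.assoc)
    show "M * norm (a - b - P) \<le> M * (real k * q)" using IH1 M0 by (rule mult_left_mono)
  qed
  also have "\<dots> \<le> L * q + L * (real k * q)"
    using L q0 by (intro add_mono mult_right_mono) (auto simp: mult_le_cancel_right1)
  also have "\<dots> = real (Suc k) * (\<delta> * L ^ Suc k * D)" unfolding q_def by (simp add: algebra_simps)
  finally have C1: "norm (itr F y (Suc k) - itr F y' (Suc k) - (A ^^ Suc k) (y - y')) \<le> real (Suc k) * (\<delta> * L ^ Suc k * D)" .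
  have "F k a - F k b = (F k a - F k b - A (a - b)) + A (a - b)" by simp
  then have "norm (F k a - F k b) \<le> \<delta> * norm (a - b) + M * norm (a - b)"
    apply (subst \<open>F k a - F k b = _\<close>) using lin Ab[of "a - b"] norm_triangle_ineq[of "F k a - F k b - A (a - b)" "A (a - b)"] by linarith
  also have "\<dots> = (M + \<delta>) * norm (a - b)" by (simp add: algebra_simps)
  also have "\<dots> \<le> L * (L ^ k * D)" using L M0 IH2 by (intro mult_mono) auto
  finally have C2: "norm (F k a - F k b) \<le> L ^ Suc k * D" by simp
  show ?case using C1 C2 unfolding a_def b_def D_def by simp
qed

lemma Dx_bl: "bounded_linear (Dx f' x lam)"
proof -
  have "bounded_linear (\<lambda>h::real^'l. (h, 0::real^'m))"
    by (intro bounded_linear_Pair bounded_linear_ident bounded_linear_zero)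
  then show ?thesis unfolding Dx_def
    by (rule bounded_linear_compose[OF blinfun.bounded_linear_right])
qed

lemma Dx_norm: "norm (Dx f' x lam h) \<le> norm (f' (x, lam)) * norm h"
  unfolding Dx_def using norm_blinfun[of "f' (x,lam)" "(h,0)"] by (simp add: norm_Pair)

lemma Dx_diff: "norm (Dx f' x lam h - Dx f' x' lam' h) \<le> norm (f' (x,lam) - f' (x',lam')) * norm h"
  unfolding Dx_def using norm_blinfun[of "f' (x,lam) - f' (x',lam')" "(h,0)"]
  by (simp add: norm_Pair blinfun.diff_left)

lemma Dx_deriv:
  assumes f_deriv: "\<And>z. (f has_derivative blinfun_apply (f' z)) (at z)"
  shows "((\<lambda>x. f (x, lam)) has_derivative Dx f' x lam) (at x within S)"
proof -
  have 1: "((\<lambda>x. (x, lam)) has_derivative (\<lambda>h. (h, 0))) (at x within S)"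
    by (auto intro!: derivative_eq_intros)
  have 2: "(f has_derivative blinfun_apply (f' (x, lam))) (at (x, lam) within (\<lambda>x. (x, lam)) ` S)"
    using f_deriv has_derivative_at_withinI by blast
  show ?thesis using has_derivative_in_compose[OF 1 2] unfolding Dx_def .
qed

lemma bl_pow:
  fixes A :: "'a::real_normed_vector \<Rightarrow> 'a"
  shows "bounded_linear A \<Longrightarrow> bounded_linear (A ^^ n)"
proof (induction n)
  case 0
  have "A ^^ 0 = (\<lambda>x. x)" by (rule ext) simp
  then show ?case using bounded_linear_ident by metis
next
  case (Suc n) then show ?case
  proof -
    have "A ^^ Suc n = (\<lambda>x. A ((A ^^ n) x))" by (rule ext) simp
    then show ?thesis using bounded_linear_compose[of A "A ^^ n"] Suc by metis
  qed
qed

lemma fix_pow: "A v = v \<Longrightarrow> (A ^^ n) v = v"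
  by (induction n) auto

lemma inj_from_pow:
  fixes A :: "'a::euclidean_space \<Rightarrow> 'a"
  assumes bl: "bounded_linear A" and pw: "onorm (A ^^ N) < 1/4"
  shows "\<exists>c>0. \<forall>v. c * norm v \<le> norm (v - A v)"
proof -
  have "\<forall>v\<in>UNIV. v - A v = 0 \<longrightarrow> v = 0"
  proof (intro ballI impI)
    fix v assume "v - A v = 0"
    then have "A v = v" by simp
    then have "(A ^^ N) v = v" by (rule fix_pow)
    then have "norm v \<le> onorm (A ^^ N) * norm v" using onorm[OF bl_pow[OF bl, of N], of v] by simp
    also have "\<dots> \<le> 1/4 * norm v" using pw by (intro mult_right_mono) auto
    finally show "v = 0" by simp
  qed
  moreover have "bounded_linear (\<lambda>v. v - A v)" by (intro bounded_linear_sub bounded_linear_ident bl)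
  ultimately obtain c where "c > 0" "\<forall>v. c * norm v \<le> norm (v - A v)"
    using injective_imp_isometric[of UNIV "\<lambda>v. v - A v"] by auto
  then show ?thesis by blast
qed

lemma local_unique:
  fixes f :: "(real^'l) \<times> (real^'m) \<Rightarrow> real^'l" and Lam :: "real \<Rightarrow> real^'m"
  assumes f_deriv: "\<And>z. (f has_derivative blinfun_apply (f' z)) (at z)"
  and f'_cont: "continuous_on UNIV f'" and Lc: "continuous_on UNIV Lam"
  and c: "c > 0" and inj: "\<And>v. c * norm v \<le> norm (v - Dx f' x0 (Lam s0) v)"
  and fix0: "f (x0, Lam s0) = x0"
  shows "\<exists>\<rho>0>0. \<forall>\<rho>. 0 < \<rho> \<and> \<rho> \<le> \<rho>0 \<longrightarrow> (\<exists>\<eta>>0. \<forall>s x. dist s s0 < \<eta> \<and> f (x, Lam s) = x \<and> norm (x - x0) \<le> \<rho> \<longrightarrow> norm (x - x0) < \<rho>/2)"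
proof -
  define z0 where "z0 = (x0, Lam s0)"
  define A where "A = Dx f' x0 (Lam s0)"
  have Abl: "bounded_linear A" unfolding A_def by (rule Dx_bl)
  obtain d where d: "d > 0" "\<And>z. dist z z0 < d \<Longrightarrow> dist (f' z) (f' z0) < c/2"
    using f'_cont c unfolding continuous_on_iff by (metis UNIV_I half_gt_zero)
  have fc: "continuous_on UNIV f"
    using f_deriv has_derivative_continuous continuous_at_imp_continuous_on by blast
  have fLc: "continuous_on UNIV (\<lambda>s. f (x0, Lam s))"
    by (rule continuous_on_compose2[OF fc]) (auto intro!: continuous_intros Lc)
  show ?thesis
  proof (rule exI[of _ "d/2"], intro conjI allI impI)
    show "d/2 > 0" using d by simp
    fix \<rho> :: real assume \<rho>: "0 < \<rho> \<and> \<rho> \<le> d/2"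
    obtain \<eta>1 where \<eta>1: "\<eta>1 > 0" "\<And>s. dist s s0 < \<eta>1 \<Longrightarrow> dist (Lam s) (Lam s0) < d/2"
      using Lc d unfolding continuous_on_iff by (metis UNIV_I half_gt_zero)
    have cr: "c * \<rho> / 4 > 0" using c \<rho> by simp
    obtain \<eta>2 where \<eta>2: "\<eta>2 > 0" "\<And>s. dist s s0 < \<eta>2 \<Longrightarrow> dist (f (x0, Lam s)) (f (x0, Lam s0)) < c * \<rho> / 4"
      using fLc cr unfolding continuous_on_iff by (metis UNIV_I)
    show "\<exists>\<eta>>0. \<forall>s x. dist s s0 < \<eta> \<and> f (x, Lam s) = x \<and> norm (x - x0) \<le> \<rho> \<longrightarrow> norm (x - x0) < \<rho>/2"
    proof (rule exI[of _ "min \<eta>1 \<eta>2"], intro conjI allI impI)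
      show "min \<eta>1 \<eta>2 > 0" using \<eta>1 \<eta>2 by simp
      fix s x assume H: "dist s s0 < min \<eta>1 \<eta>2 \<and> f (x, Lam s) = x \<and> norm (x - x0) \<le> \<rho>"
      define g where "g z = f (z, Lam s) - A z" for z
      have gd: "(g has_derivative (\<lambda>h. Dx f' z (Lam s) h - A h)) (at z within cball x0 \<rho>)" for z
        unfolding g_def by (intro has_derivative_diff Dx_deriv[OF f_deriv] bounded_linear_imp_has_derivative Abl)
      have gb: "onorm (\<lambda>h. Dx f' z (Lam s) h - A h) \<le> c/2" if z: "z \<in> cball x0 \<rho>" for z
      proof (rule onorm_bound)
        show "0 \<le> c/2" using c by simp
        fix h
        have "dist (z, Lam s) z0 \<le> norm (z - x0) + norm (Lam s - Lam s0)"
          unfolding z0_def dist_norm using norm_Pair_le[of "z - x0" "Lam s - Lam s0"] by simp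
        also have "\<dots> < d/2 + d/2" using z \<rho> \<eta>1(2)[of s] H by (auto simp: dist_norm norm_minus_commute)
        finally have "dist (f' (z, Lam s)) (f' z0) < c/2" using d(2) by simp
        then show "norm (Dx f' z (Lam s) h - A h) \<le> c/2 * norm h"
          using Dx_diff[of f' z "Lam s" h x0 "Lam s0"] unfolding A_def z0_def dist_norm
          by (smt (verit) mult_right_mono norm_ge_zero)
      qed
      have xin: "x \<in> cball x0 \<rho>" using H by (simp add: dist_norm norm_minus_commute)
      have x0in: "x0 \<in> cball x0 \<rho>" using \<rho> by simp
      have gg: "norm (g x - g x0) \<le> c/2 * norm (x - x0)"
        by (rule differentiable_bound[OF convex_cball gd gb xin x0in])
      have eq: "(x - x0) - A (x - x0) = (g x - g x0) + (f (x0, Lam s) - f (x0, Lam s0))"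
        using H fix0 linear_simps(2)[OF Abl, of x x0] unfolding g_def by (simp add: algebra_simps)
      have "c * norm (x - x0) \<le> norm ((x - x0) - A (x - x0))" using inj unfolding A_def by blast
      also have "\<dots> \<le> norm (g x - g x0) + norm (f (x0, Lam s) - f (x0, Lam s0))"
        unfolding eq by (rule norm_triangle_ineq)
      also have "\<dots> < c/2 * norm (x - x0) + c * \<rho> / 4"
        using gg \<eta>2(2)[of s] H by (simp add: dist_norm)
      finally have "c/2 * norm (x - x0) < c/2 * (\<rho>/2)" by (simp add: algebra_simps)
      then show "norm (x - x0) < \<rho>/2" using c by (simp add: mult_less_cancel_left_pos)
    qed
  qed
qed

lemma X_continuous:
  fixes f :: "(real^'l) \<times> (real^'m) \<Rightarrow> real^'l" and Lam :: "real \<Rightarrow> real^'m" and X :: "real \<Rightarrow> real^'l"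
  assumes f_deriv: "\<And>z. (f has_derivative blinfun_apply (f' z)) (at z)"
  and f'_cont: "continuous_on UNIV f'" and Lc: "continuous_on UNIV Lam"
  and conn: "connected {(s, X s) | s. True}" and fixp: "\<And>s. f (X s, Lam s) = X s"
  and injc: "\<And>s0. \<exists>c>0. \<forall>v. c * norm v \<le> norm (v - Dx f' (X s0) (Lam s0) v)"
  shows "continuous_on UNIV X"
  unfolding continuous_on_iff
proof (intro ballI allI impI)
  fix s0 :: real and e :: real assume e: "e > 0"
  obtain c where c: "c>0" "\<And>v. c * norm v \<le> norm (v - Dx f' (X s0) (Lam s0) v)" using injc[of s0] by (elim exE conjE) auto
  obtain \<rho>0 where \<rho>0: "\<rho>0>0" "\<forall>\<rho>. 0 < \<rho> \<and> \<rho> \<le> \<rho>0 \<longrightarrow> (\<exists>\<eta>>0. \<forall>s x. dist s s0 < \<eta> \<and> f (x, Lam s) = x \<and> norm (x - X s0) \<le> \<rho> \<longrightarrow> norm (x - X s0) < \<rho>/2)"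
    using local_unique[OF f_deriv f'_cont Lc c(1) c(2) fixp] by (elim exE conjE) auto
  define \<rho> where "\<rho> = min e \<rho>0"
  have \<rho>pos: "0 < \<rho> \<and> \<rho> \<le> \<rho>0" using e \<rho>0 unfolding \<rho>_def by simp
  then obtain \<eta> where \<eta>: "\<eta>>0" "\<And>s x. dist s s0 < \<eta> \<Longrightarrow> f (x, Lam s) = x \<Longrightarrow> norm (x - X s0) \<le> \<rho> \<Longrightarrow> norm (x - X s0) < \<rho>/2"
    using \<rho>0(2)[rule_format, OF \<rho>pos] by (elim exE conjE) auto
  show "\<exists>d>0. \<forall>x'\<in>UNIV. dist x' s0 < d \<longrightarrow> dist (X x') (X s0) < e"
  proof (rule exI[of _ \<eta>], intro conjI ballI impI)
    show "\<eta> > 0" by (rule \<eta>(1))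
    fix s assume "dist s s0 < \<eta>"
    then have s: "s0 - \<eta> < s" "s < s0 + \<eta>" by (auto simp: dist_real_def)
    have ne: "norm (X t - X s0) \<noteq> \<rho>/2" if "s0-\<eta> < t" "t < s0+\<eta>" for t
    proof
      assume eq: "norm (X t - X s0) = \<rho>/2"
      have "dist t s0 < \<eta>" using that by (auto simp: dist_real_def)
      moreover have "norm (X t - X s0) \<le> \<rho>" using eq \<rho>pos by simp
      ultimately have "norm (X t - X s0) < \<rho>/2" using \<eta>(2)[OF _ fixp[of t]] by simp
      with eq show False by simp
    qed
    have h1: "s0 - \<eta> < s0" "s0 < s0 + \<eta>" using \<eta>(1) by auto
    have h2: "norm (X s0 - X s0) < \<rho>/2" using \<rho>pos by simp
    have "norm (X s - X s0) < \<rho>/2" using sep_both[OF conn h1(1) h1(2) ne h2 s] .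
    then show "dist (X s) (X s0) < e" using \<rho>pos e unfolding \<rho>_def by (simp add: dist_norm)
  qed
qed

lemma Fr_pow: "(Fr f Lam r ^^ k) (s, y) = (s + real k * r, itr (\<lambda>j x. f (x, Lam (s + real j * r))) y k)"
  by (induction k) (auto simp: Fr_def algebra_simps)

lemma gt_itr: "graph_transform f Lam r n u t = itr (\<lambda>j x. f (x, Lam (t - real n * r + real j * r))) (u (t - real n * r)) n"
  by (simp add: graph_transform_def Fr_pow)

theorem mainTheorem15:
  fixes f :: "(real^'l) \<times> (real^'m) \<Rightarrow> real^'l"
    and f' :: "(real^'l) \<times> (real^'m) \<Rightarrow> ((real^'l) \<times> (real^'m)) \<Rightarrow>\<^sub>L (real^'l)"
    and Lam :: "real \<Rightarrow> real^'m" and lm lp :: "real^'m"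
    and X :: "real \<Rightarrow> real^'l" and N :: nat
  assumes f_deriv: "\<And>z. (f has_derivative blinfun_apply (f' z)) (at z)"
    and f'_cont: "continuous_on UNIV f'"
    and shift: "parameter_shift Lam lm lp"
    and stable: "stable_path f f' Lam lm lp X"
    and N_bound: "\<And>s n. n \<ge> N \<Longrightarrow> onorm (Dx f' (X s) (Lam s) ^^ n) < 1/4"
  shows "\<exists>eps0>0. \<forall>eps. 0 < eps \<and> eps \<le> eps0 \<longrightarrow>
           (\<exists>r0>0. \<forall>r. 0 < r \<and> r \<le> r0 \<longrightarrow>
              (\<forall>n \<in> {N..N*(N+1)}.
                 (\<forall>u \<in> Sspace eps X. graph_transform f Lam r n u \<in> Sspace eps X)
               \<and> (\<forall>u \<in> Sspace eps X. \<forall>u' \<in> Sspace eps X.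
                    sup_dist (graph_transform f Lam r n u) (graph_transform f Lam r n u')
                      \<le> 1/2 * sup_dist u u')))"
proof -
  have fixp: "\<And>s. f (X s, Lam s) = X s" using stable unfolding stable_path_def by blast
  have conn: "connected {(s, X s) | s. True}" using stable unfolding stable_path_def by blast
  obtain Xm Xp where Xlim: "(X \<longlongrightarrow> Xm) at_bot" "(X \<longlongrightarrow> Xp) at_top"
    using stable unfolding stable_path_def by blast
  obtain Lam' where LD: "\<And>s. (Lam has_vector_derivative Lam' s) (at s)"
    using shift unfolding parameter_shift_def by blast
  have Llim: "(Lam \<longlongrightarrow> lm) at_bot" "(Lam \<longlongrightarrow> lp) at_top"
    using shift unfolding parameter_shift_def by blast+
  have Lc: "continuous_on UNIV Lam"
    using LD has_vector_derivative_continuous continuous_at_imp_continuous_on by blast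
  define A where "A s = Dx f' (X s) (Lam s)" for s
  have Abl: "\<And>s. bounded_linear (A s)" by (simp add: A_def Dx_bl)
  have injc: "\<And>s0. \<exists>c>0. \<forall>v. c * norm v \<le> norm (v - Dx f' (X s0) (Lam s0) v)"
    using inj_from_pow[OF Dx_bl N_bound[OF order_refl]] by blast
  have Xc: "continuous_on UNIV X" by (rule X_continuous[OF f_deriv f'_cont Lc conn fixp injc])
  have Xuc: "uniformly_continuous_on UNIV X" and Xb: "bounded (range X)"
    using uc_lim[OF Xc Xlim] by auto
  have Luc: "uniformly_continuous_on UNIV Lam" and Lb: "bounded (range Lam)"
    using uc_lim[OF Lc Llim] by auto
  define P where "P = range (\<lambda>s. (X s, Lam s))"
  have "P \<subseteq> range X \<times> range Lam" unfolding P_def by auto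
  then have Pb: "bounded P" using bounded_Times[OF Xb Lb] bounded_subset by blast
  define K where "K = closure P"
  have Kc: "compact K" using Pb by (simp add: K_def)
  define C where "C = {a + b | a b. a \<in> K \<and> b \<in> cball (0::(real^'l)\<times>(real^'m)) 1}"
  have Cc: "compact C" unfolding C_def by (rule compact_sums[OF Kc compact_cball])
  have memC: "(x, l) \<in> C" if h: "norm (x - X s) \<le> 1/2" "norm (l - Lam s) \<le> 1/2" for s x l
  proof -
    have "(X s, Lam s) \<in> K" unfolding K_def P_def by (meson closure_subset rangeI subsetD)
    moreover have "(x - X s, l - Lam s) \<in> cball 0 1"
      using norm_Pair_le[of "x - X s" "l - Lam s"] h by simp
    moreover have "(x, l) = (X s, Lam s) + (x - X s, l - Lam s)" by simp
    ultimately show "(x, l) \<in> C" unfolding C_def by blast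
  qed
  have memC0: "(X s, Lam s) \<in> C" for s using memC[where s=s and x="X s" and l="Lam s"] by simp
  have fc: "continuous_on UNIV f"
    using f_deriv has_derivative_continuous continuous_at_imp_continuous_on by blast
  have "bounded (f' ` C)"
    by (intro compact_imp_bounded compact_continuous_image continuous_on_subset[OF f'_cont] Cc) auto
  then obtain M0 where M0: "\<And>z. z \<in> C \<Longrightarrow> norm (f' z) \<le> M0" unfolding bounded_iff by blast
  define M where "M = max M0 1"
  have M1: "M \<ge> 1" unfolding M_def by simp
  have MC: "\<And>z. z \<in> C \<Longrightarrow> norm (f' z) \<le> M" using M0 unfolding M_def by force
  have Ab: "norm (A s h) \<le> M * norm h" for s h
  proof -
    have "norm (A s h) \<le> norm (f' (X s, Lam s)) * norm h" unfolding A_def by (rule Dx_norm)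
    also have "\<dots> \<le> M * norm h" using MC[OF memC0] by (simp add: mult_right_mono)
    finally show ?thesis .
  qed
  have An: "norm ((A s ^^ n) h) \<le> 1/4 * norm h" if "N \<le> n" for s n h
  proof -
    have "norm ((A s ^^ n) h) \<le> onorm (A s ^^ n) * norm h" by (rule onorm[OF bl_pow[OF Abl]])
    also have "\<dots> \<le> 1/4 * norm h" using N_bound[OF that, of s] unfolding A_def
      by (intro mult_right_mono) auto
    finally show ?thesis .
  qed
  define NN where "NN = N * (N + 1)"
  define L where "L = 2 * M"
  define B where "B = L ^ NN"
  have L1: "L \<ge> 1" using M1 unfolding L_def by simp
  have B1: "B \<ge> 1" unfolding B_def using L1 by (rule one_le_power)
  define D0 where "D0 = 4 * (real NN + 1) * B"
  have "1 * 1 \<le> (real NN + 1) * B" using B1 by (intro mult_mono) auto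
  then have D0: "D0 \<ge> 4" unfolding D0_def mult.assoc by linarith
  define \<delta> where "\<delta> = 1 / D0"
  have \<delta>pos: "\<delta> > 0" unfolding \<delta>_def using D0 by simp
  have \<delta>le: "\<delta> \<le> 1" unfolding \<delta>_def using D0 by simp
  have MLe: "M \<le> L" "M + \<delta> \<le> L" using M1 \<delta>le unfolding L_def by auto
  have "uniformly_continuous_on C f'"
    by (rule compact_uniformly_continuous[OF continuous_on_subset[OF f'_cont] Cc]) auto
  then obtain \<rho> where \<rho>: "\<rho> > 0" "\<And>z z'. z \<in> C \<Longrightarrow> z' \<in> C \<Longrightarrow> dist z' z < \<rho> \<Longrightarrow> dist (f' z') (f' z) < \<delta>"
    unfolding uniformly_continuous_on_def using \<delta>pos by metis
  define \<rho>1 where "\<rho>1 = min (\<rho>/3) (1/2)"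
  have \<rho>1: "\<rho>1 > 0" "\<rho>1 \<le> 1/2" "2 * \<rho>1 < \<rho>" using \<rho> unfolding \<rho>1_def by auto
  have LIN: "norm (f (x,l) - f (x',l) - A s (x - x')) \<le> \<delta> * norm (x - x')"
    if hl: "norm (l - Lam s) \<le> \<rho>1" and hx: "norm (x - X s) \<le> \<rho>1" and hx': "norm (x' - X s) \<le> \<rho>1" for s l x x'
  proof -
    define g where "g z = f (z, l) - A s z" for z
    have gd: "(g has_derivative (\<lambda>h. Dx f' z l h - A s h)) (at z within cball (X s) \<rho>1)" for z
      unfolding g_def by (intro has_derivative_diff Dx_deriv[OF f_deriv] bounded_linear_imp_has_derivative Abl)
    have gb: "onorm (\<lambda>h. Dx f' z l h - A s h) \<le> \<delta>" if z: "z \<in> cball (X s) \<rho>1" for z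
    proof (rule onorm_bound)
      show "0 \<le> \<delta>" using \<delta>pos by simp
      fix h
      have zn: "norm (z - X s) \<le> \<rho>1" using z by (simp add: dist_norm norm_minus_commute)
      have "dist (z, l) (X s, Lam s) \<le> norm (z - X s) + norm (l - Lam s)"
        unfolding dist_norm using norm_Pair_le[of "z - X s" "l - Lam s"] by simp
      also have "\<dots> < \<rho>" using zn hl \<rho>1 by linarith
      finally have dd: "dist (z, l) (X s, Lam s) < \<rho>" .
      have zlC: "(z, l) \<in> C" using zn hl \<rho>1 by (intro memC[where s=s]) auto
      have "dist (f' (z, l)) (f' (X s, Lam s)) < \<delta>"
        by (rule \<rho>(2)[OF memC0 zlC dd])
      then show "norm (Dx f' z l h - A s h) \<le> \<delta> * norm h"
        using Dx_diff[of f' z l h "X s" "Lam s"] unfolding A_def dist_norm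
        by (smt (verit) mult_right_mono norm_ge_zero)
    qed
    have xin: "x \<in> cball (X s) \<rho>1" "x' \<in> cball (X s) \<rho>1"
      using hx hx' by (simp_all add: dist_norm norm_minus_commute)
    have "norm (g x - g x') \<le> \<delta> * norm (x - x')"
      by (rule differentiable_bound[OF convex_cball gd gb xin])
    moreover have "g x - g x' = f (x,l) - f (x',l) - A s (x - x')"
      unfolding g_def using linear_simps(2)[OF Abl] by (simp add: algebra_simps)
    ultimately show ?thesis by simp
  qed
  define eps0 where "eps0 = \<rho>1 / (2 * B)"
  show ?thesis
  proof (rule exI[of _ eps0], intro conjI allI impI)
    show "eps0 > 0" unfolding eps0_def using \<rho>1 B1 by simp
    fix eps :: real assume eps: "0 < eps \<and> eps \<le> eps0"
    define \<gamma> where "\<gamma> = eps / (4 * B * (real NN + 1))"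
    have \<gamma>pos: "\<gamma> > 0" unfolding \<gamma>_def using eps B1 by simp
    have NN\<gamma>: "real NN * \<gamma> \<le> eps / (4 * B)"
    proof -
      have "real NN * \<gamma> = (eps / (4 * B)) * (real NN / (real NN + 1))"
        unfolding \<gamma>_def by (simp add: field_simps)
      also have "\<dots> \<le> (eps / (4 * B)) * 1"
        using eps B1 by (intro mult_left_mono) auto
      finally show ?thesis by simp
    qed
    have BNN\<gamma>: "B * (real NN * \<gamma>) \<le> eps / 4"
    proof -
      have "B * (real NN * \<gamma>) \<le> B * (eps / (4 * B))" using NN\<gamma> B1 by (intro mult_left_mono) auto
      also have "\<dots> = eps / 4" using B1 by simp
      finally show ?thesis .
    qed
    have "eps / (4 * B) \<le> eps / 1" by (rule divide_left_mono) (use eps B1 in auto)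
    then have NN\<gamma>2: "real NN * \<gamma> \<le> eps" using NN\<gamma> by simp
    have "uniformly_continuous_on C f"
      by (rule compact_uniformly_continuous[OF continuous_on_subset[OF fc] Cc]) auto
    then obtain \<rho>f where \<rho>f: "\<rho>f > 0" "\<And>z z'. z \<in> C \<Longrightarrow> z' \<in> C \<Longrightarrow> dist z' z < \<rho>f \<Longrightarrow> dist (f z') (f z) < \<gamma>"
      unfolding uniformly_continuous_on_def using \<gamma>pos by metis
    define \<rho>3 where "\<rho>3 = min \<rho>1 (\<rho>f/2)"
    have \<rho>3: "\<rho>3 > 0" "\<rho>3 \<le> \<rho>1" "\<rho>3 < \<rho>f" using \<rho>1 \<rho>f unfolding \<rho>3_def by auto
    obtain \<eta>L where \<eta>L: "\<eta>L > 0" "\<And>t t'. dist t' t < \<eta>L \<Longrightarrow> dist (Lam t') (Lam t) < \<rho>3"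
      using Luc \<rho>3(1) unfolding uniformly_continuous_on_def by (metis UNIV_I)
    have e4: "eps / 4 > 0" using eps by simp
    obtain \<eta>X where \<eta>X: "\<eta>X > 0" "\<And>t t'. dist t' t < \<eta>X \<Longrightarrow> dist (X t') (X t) < eps / 4"
      using Xuc e4 unfolding uniformly_continuous_on_def by (metis UNIV_I)
    define r0 where "r0 = min \<eta>L \<eta>X / (real NN + 1)"
    show "\<exists>r0>0. \<forall>r. 0 < r \<and> r \<le> r0 \<longrightarrow>
              (\<forall>n \<in> {N..N*(N+1)}.
                 (\<forall>u \<in> Sspace eps X. graph_transform f Lam r n u \<in> Sspace eps X)
               \<and> (\<forall>u \<in> Sspace eps X. \<forall>u' \<in> Sspace eps X.
                    sup_dist (graph_transform f Lam r n u) (graph_transform f Lam r n u')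
                      \<le> 1/2 * sup_dist u u'))"
    proof (rule exI[of _ r0], intro conjI allI impI ballI)
      show "r0 > 0" unfolding r0_def using \<eta>L \<eta>X by simp
      fix r n assume r: "0 < r \<and> r \<le> r0" and n: "n \<in> {N..N*(N+1)}"
      have nN: "N \<le> n" "n \<le> NN" using n unfolding NN_def by auto
      have kr: "real k * r < min \<eta>L \<eta>X" if "k \<le> NN" for k
      proof -
        have "real k * r \<le> real NN * r0" using r that by (intro mult_mono) auto
        also have "\<dots> < (real NN + 1) * r0" using \<open>r0 > 0\<close> by (simp add: distrib_right)
        also have "\<dots> = min \<eta>L \<eta>X" unfolding r0_def by simp
        finally show ?thesis .
      qed
      have kr0: "real k * r \<ge> 0" for k using r by simp
      define F where "F s = (\<lambda>j x. f (x, Lam (s + real j * r)))" for s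
      have lamclose: "norm (Lam (s + real k * r) - Lam s) < \<rho>3" if "k \<le> NN" for s k
        using \<eta>L(2)[of "s + real k * r" s] kr[OF that] kr0[of k] by (simp add: dist_norm)
      have LINs: "norm (F s k x - F s k x' - A s (x - x')) \<le> \<delta> * norm (x - x')"
        if "k < n" "norm (x - X s) \<le> \<rho>1" "norm (x' - X s) \<le> \<rho>1" for s k x x'
        unfolding F_def using LIN[OF _ that(2) that(3)] lamclose[of k s] that(1) nN \<rho>3 by simp
      have Lip: "norm (F s k x - F s k x') \<le> L * norm (x - x')"
        if "k < n" "norm (x - X s) \<le> \<rho>1" "norm (x' - X s) \<le> \<rho>1" for s k x x'
      proof -
        have "F s k x - F s k x' = (F s k x - F s k x' - A s (x - x')) + A s (x - x')" by simp
        then have "norm (F s k x - F s k x') \<le> \<delta> * norm (x - x') + M * norm (x - x')"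
          apply (subst \<open>F s k x - F s k x' = _\<close>) using LINs[OF that] Ab[of s "x - x'"]
            norm_triangle_ineq[of "F s k x - F s k x' - A s (x - x')" "A s (x - x')"] by linarith
        also have "\<dots> = (M + \<delta>) * norm (x - x')" by (simp add: algebra_simps)
        also have "\<dots> \<le> L * norm (x - x')" using MLe(2) by (rule mult_right_mono) simp
        finally show ?thesis .
      qed
      have drift: "norm (F s k (X s) - X s) \<le> \<gamma>" if "k < n" for s k
      proof -
        have lc: "norm (Lam (s + real k * r) - Lam s) < \<rho>3" using lamclose[of k s] that nN by simp
        have "(X s, Lam (s + real k * r)) \<in> C" using lc \<rho>3 \<rho>1 by (intro memC[where s=s]) auto
        moreover have "dist (X s, Lam (s + real k * r)) (X s, Lam s) < \<rho>f"
          using lc \<rho>3 by (simp add: dist_Pair_Pair dist_norm)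
        ultimately have "dist (f (X s, Lam (s + real k * r))) (f (X s, Lam s)) < \<gamma>"
          using \<rho>f(2)[OF memC0] by blast
        then show ?thesis unfolding F_def using fixp[of s] by (simp add: dist_norm)
      qed
      have Ln: "L ^ k \<le> B" if "k \<le> NN" for k
        unfolding B_def using L1 that by (rule power_increasing[rotated])
      have small: "L ^ n * (e' + real n * \<gamma>) \<le> \<rho>1" if "0 \<le> e'" "e' \<le> eps" for e'
      proof -
        have "real n * \<gamma> \<le> real NN * \<gamma>" using nN \<gamma>pos by (intro mult_right_mono) auto
        then have "e' + real n * \<gamma> \<le> 2 * eps" using that NN\<gamma>2 by linarith
        then have "L ^ n * (e' + real n * \<gamma>) \<le> B * (2 * eps)"
          using Ln[OF nN(2)] that \<gamma>pos B1 by (intro mult_mono) auto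
        also have "\<dots> \<le> B * (2 * eps0)" using eps B1 by simp
        also have "\<dots> = \<rho>1" unfolding eps0_def using B1 by simp
        finally show ?thesis .
      qed
      have stay: "norm (itr (F s) y k - X s) \<le> L ^ k * (e' + real k * \<gamma>)"
        if "norm (y - X s) \<le> e'" "0 \<le> e'" "e' \<le> eps" "k \<le> n" for s y k e'
        by (rule itr_stay[OF L1 less_imp_le[OF \<gamma>pos] that(2) Lip drift that(1) small[OF that(2,3)] that(4)])
      have stay1: "norm (itr (F s) y k - X s) \<le> \<rho>1"
        if "norm (y - X s) \<le> eps" "k \<le> n" for s y k
      proof -
        have "L ^ k * (eps + real k * \<gamma>) \<le> L ^ n * (eps + real n * \<gamma>)"
          using L1 \<gamma>pos eps that(2) by (intro mult_mono power_increasing) (auto intro: mult_right_mono)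
        then show ?thesis using stay[OF that(1) _ _ that(2)] small[of eps] eps by fastforce
      qed
      have contr: "norm (itr (F s) y n - itr (F s) y' n) \<le> 1/2 * norm (y - y')"
        if "norm (y - X s) \<le> eps" "norm (y' - X s) \<le> eps" for s y y'
      proof -
        have "norm (itr (F s) y n - itr (F s) y' n - (A s ^^ n) (y - y')) \<le> real n * (\<delta> * L^n * norm (y - y'))"
          using itr_contract[OF Abl Ab L1 MLe less_imp_le[OF \<delta>pos] _ LINs stay1[OF that(1)] stay1[OF that(2)], of n]
            M1 by auto
        also have "\<dots> \<le> real NN * (\<delta> * B * norm (y - y'))"
        proof -
          have Lp: "0 \<le> L ^ n" using L1 by simp
          have "\<delta> * L^n * norm (y - y') \<le> \<delta> * B * norm (y - y')"
            using Ln[OF nN(2)] \<delta>pos by (intro mult_right_mono mult_left_mono) auto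
          moreover have "0 \<le> \<delta> * L^n * norm (y - y')" using Lp \<delta>pos by simp
          moreover have "real n \<le> real NN" using nN(2) by simp
          ultimately show ?thesis by (metis mult_mono of_nat_0_le_iff order_trans)
        qed
        also have "\<dots> \<le> 1/4 * norm (y - y')"
        proof -
          have "\<delta> * B = B / (B * (4 * (real NN + 1)))" unfolding \<delta>_def D0_def by (simp add: mult.commute)
          also have "\<dots> = 1 / (4 * (real NN + 1))" using B1 by (intro nonzero_divide_mult_cancel_left) simp
          finally have "real NN * (\<delta> * B) = real NN / (4 * (real NN + 1))" by simp
          also have "\<dots> \<le> 1/4" by (simp add: field_simps)
          finally show ?thesis by (metis mult.assoc mult_right_mono norm_ge_zero)
        qed
        finally have a: "norm (itr (F s) y n - itr (F s) y' n - (A s ^^ n) (y - y')) \<le> 1/4 * norm (y - y')" .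
        have b: "norm ((A s ^^ n) (y - y')) \<le> 1/4 * norm (y - y')" by (rule An[OF nN(1)])
        show ?thesis using a b norm_triangle_ineq[of "itr (F s) y n - itr (F s) y' n - (A s ^^ n) (y - y')" "(A s ^^ n) (y - y')"]
          by simp
      qed
      have gt: "graph_transform f Lam r n u t = itr (F (t - real n * r)) (u (t - real n * r)) n" for u t
        unfolding gt_itr F_def ..
      have nr: "real n * r < \<eta>X" using kr[OF nN(2)] by simp
      have nr0: "real n * r \<ge> 0" using r by simp
      show "graph_transform f Lam r n u \<in> Sspace eps X" if hu: "u \<in> Sspace eps X" for u
        unfolding Sspace_def
      proof (intro CollectI allI)
        fix t
        define s where "s = t - real n * r"
        have us: "norm (u s - X s) \<le> eps" using hu unfolding Sspace_def by blast
        have a: "norm (itr (F s) (u s) n - itr (F s) (X s) n) \<le> 1/2 * norm (u s - X s)"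
          by (rule contr[OF us]) (use eps in simp)
        have b: "norm (itr (F s) (X s) n - X s) \<le> L ^ n * (0 + real n * \<gamma>)"
          by (rule stay) (use eps in auto)
        have b2: "L ^ n * (0 + real n * \<gamma>) \<le> eps/4"
        proof -
          have "real n * \<gamma> \<le> real NN * \<gamma>" using nN \<gamma>pos by (intro mult_right_mono) auto
          then have "L ^ n * (real n * \<gamma>) \<le> B * (real NN * \<gamma>)"
            using Ln[OF nN(2)] \<gamma>pos B1 by (intro mult_mono) auto
          then show ?thesis using BNN\<gamma> by simp
        qed
        have c: "norm (X s - X t) < eps/4"
          using \<eta>X(2)[of t s] nr nr0 unfolding s_def by (simp add: dist_norm norm_minus_commute)
        have "graph_transform f Lam r n u t - X t = (itr (F s) (u s) n - itr (F s) (X s) n) + (itr (F s) (X s) n - X s) + (X s - X t)"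
          unfolding gt s_def by simp
        then have "norm (graph_transform f Lam r n u t - X t) \<le> norm (itr (F s) (u s) n - itr (F s) (X s) n) + norm (itr (F s) (X s) n - X s) + norm (X s - X t)"
          apply (simp only:)
          using norm_triangle_ineq[of "(itr (F s) (u s) n - itr (F s) (X s) n) + (itr (F s) (X s) n - X s)" "X s - X t"]
            norm_triangle_ineq[of "itr (F s) (u s) n - itr (F s) (X s) n" "itr (F s) (X s) n - X s"]
          by linarith
        then show "norm (graph_transform f Lam r n u t - X t) \<le> eps"
          using a b b2 c us by linarith
      qed
      show "sup_dist (graph_transform f Lam r n u) (graph_transform f Lam r n u') \<le> 1/2 * sup_dist u u'"
        if hu: "u \<in> Sspace eps X" and hu': "u' \<in> Sspace eps X" for u u'
      proof -
        have bdd: "bdd_above (range (\<lambda>s. norm (u s - u' s)))"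
        proof (rule bdd_aboveI2)
          fix s
          have "u s - u' s = (u s - X s) - (u' s - X s)" by simp
          then have "norm (u s - u' s) \<le> norm (u s - X s) + norm (u' s - X s)"
            by (metis norm_triangle_ineq4)
          moreover have "norm (u s - X s) \<le> eps" "norm (u' s - X s) \<le> eps" using hu hu' unfolding Sspace_def by blast+
          ultimately show "norm (u s - u' s) \<le> 2 * eps" by linarith
        qed
        have pt: "norm (graph_transform f Lam r n u t - graph_transform f Lam r n u' t) \<le> 1/2 * sup_dist u u'" for t
        proof -
          define s where "s = t - real n * r"
          have us: "norm (u s - X s) \<le> eps" "norm (u' s - X s) \<le> eps" using hu hu' unfolding Sspace_def by blast+
          have "norm (graph_transform f Lam r n u t - graph_transform f Lam r n u' t) \<le> 1/2 * norm (u s - u' s)"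
            unfolding gt s_def[symmetric] by (rule contr[OF us])
          also have "norm (u s - u' s) \<le> sup_dist u u'"
            unfolding sup_dist_def by (rule cSUP_upper[OF UNIV_I bdd])
          then have "1/2 * norm (u s - u' s) \<le> 1/2 * sup_dist u u'" by simp
          finally show ?thesis .
        qed
        show ?thesis unfolding sup_dist_def[of "graph_transform f Lam r n u"]
          by (rule cSUP_least) (simp, rule pt)
      qed
    qed
  qed
qed

end
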